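(* Let $\bar{\ell}_2(Z_1,Z_2):=\sup_{(s,a)\in\mathcal S\times\mathcal A}\ell_2\big(Z_1(s,a),Z_2(s,a)\big)$ for value distributions $Z_1,Z_2$. Then $\bar{\ell}_2$ is a metric on value distributions (for which it is finite), and the distributional Bellman operator $\mathcal{T}^{\pi}$ is a $\sqrt{\gamma}$-contraction in $\bar{\ell}_2$, i.e. for all value distributions $Z_1,Z_2$, $$\bar{\ell}_2(\mathcal{T}^{\pi}Z_1,\mathcal{T}^{\pi}Z_2)\le\sqrt{\gamma}\,\bar{\ell}_2(Z_1,Z_2).$$
   Context: Consider a Markov decision process with finite state space $\mathcal S$, finite action space $\mathcal A$, transition probabilities $P(s'|s,a)$, random rewards $R(s,a)$ and discount factor $\gamma\in(0,1)$, together with a fixed stochastic policy $\pi$. A value distribution $Z$ assigns to each $(s,a)$ a real random variable (random return) $Z(s,a)$. The transition operator is $P^{\pi}Z(s,a)\overset{D}{=}Z(s',a')$ with $s'\sim P(\cdot|s,a)$, $a'\sim\pi(\cdot|s')$, and the distributional Bellman operator is $\mathcal{T}^{\pi}Z(s,a)\overset{D}{=}R(s,a)+\gamma P^{\pi}Z(s,a)$, where $R(s,a)$ is independent of $P^\pi Z(s,a)$ and $\overset{D}{=}$ means equality in distribution. For real random variables $X,Y$ with cumulative distribution functions $F_X,F_Y$, the square root of the Cramér distance is $\ell_2(X,Y)=\big(\int_{-\infty}^{\infty}(F_X(x)-F_Y(x))^2\,dx\big)^{1/2}$ (depending only on the laws of $X,Y$). *)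

theory Defs
  imports "HOL-Probability.Probability"
begin

definition real_law :: "real measure \<Rightarrow> bool" where
  "real_law M \<longleftrightarrow> prob_space M \<and> sets M = sets borel"

definition value_dist :: "('s \<Rightarrow> 'a \<Rightarrow> real measure) \<Rightarrow> bool" where
  "value_dist Z \<longleftrightarrow> (\<forall>s a. real_law (Z s a))"

text \<open>Square root of the Cramer distance (possibly infinite, hence valued in ennreal).\<close>
definition cramer_sq :: "real measure \<Rightarrow> real measure \<Rightarrow> ennreal" where
  "cramer_sq M N = (\<integral>\<^sup>+ x. ennreal ((cdf M x - cdf N x)\<^sup>2) \<partial>lborel)"

definition ell2 :: "real measure \<Rightarrow> real measure \<Rightarrow> ennreal" where
  "ell2 M N = (if cramer_sq M N = \<infinity> then \<infinity> else ennreal (sqrt (enn2real (cramer_sq M N))))"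

definition ell2_bar :: "('s \<Rightarrow> 'a \<Rightarrow> real measure) \<Rightarrow> ('s \<Rightarrow> 'a \<Rightarrow> real measure) \<Rightarrow> ennreal" where
  "ell2_bar Z1 Z2 = (SUP sa. ell2 (Z1 (fst sa) (snd sa)) (Z2 (fst sa) (snd sa)))"

definition trans_op :: "('s \<Rightarrow> 'a \<Rightarrow> 's pmf) \<Rightarrow> ('s \<Rightarrow> 'a pmf)
     \<Rightarrow> ('s \<Rightarrow> 'a \<Rightarrow> real measure) \<Rightarrow> 's \<Rightarrow> 'a \<Rightarrow> real measure" where
  "trans_op P \<pi> Z s a =
     measure_pmf (P s a) \<bind> (\<lambda>s'. measure_pmf (\<pi> s') \<bind> (\<lambda>a'. Z s' a'))"

text \<open>Distributional Bellman operator: law of R(s,a) + gamma * (P^pi Z)(s,a), with the two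
  summands independent (convolution of their laws).\<close>
definition bellman :: "('s \<Rightarrow> 'a \<Rightarrow> 's pmf) \<Rightarrow> ('s \<Rightarrow> 'a pmf) \<Rightarrow> ('s \<Rightarrow> 'a \<Rightarrow> real measure)
     \<Rightarrow> real \<Rightarrow> ('s \<Rightarrow> 'a \<Rightarrow> real measure) \<Rightarrow> 's \<Rightarrow> 'a \<Rightarrow> real measure" where
  "bellman P \<pi> R \<gamma> Z s a =
     convolution (R s a) (distr (trans_op P \<pi> Z s a) borel (\<lambda>x. \<gamma> * x))"

end

theory Submission
  imports Defs
begin

lemma rd_law: "real_law M \<Longrightarrow> real_distribution M"
  unfolding real_law_def real_distribution_def real_distribution_axioms_def by auto

lemma cdf_meas: "real_law M \<Longrightarrow> cdf M \<in> borel_measurable borel"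
  apply (rule borel_measurable_mono)
  unfolding mono_def using rd_law real_distribution.finite_borel_measure_M
  finite_borel_measure.cdf_nondecreasing by blast

lemma cdf_01: "real_law M \<Longrightarrow> 0 \<le> cdf M x \<and> cdf M x \<le> 1"
  using rd_law[of M] real_distribution.cdf_bounded_prob real_distribution.finite_borel_measure_M finite_borel_measure.cdf_nonneg by blast

lemma ell2_sq: "ell2 M N ^ 2 = cramer_sq M N"
  unfolding ell2_def
  by (cases "cramer_sq M N") (auto simp: ennreal_power)

lemma ennreal_sq_le: "(x::ennreal)^2 \<le> y^2 \<Longrightarrow> x \<le> y"
proof (cases x; cases y)
  fix a b assume "x^2 \<le> y^2" "x = ennreal a" "0 \<le> a" "y = ennreal b" "0 \<le> b"
  then show "x \<le> y" by (auto simp: ennreal_power intro: power2_le_imp_le)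
qed (auto simp: ennreal_power top_unique)

lemma ell2_le_iff: "ell2 M N \<le> D \<longleftrightarrow> cramer_sq M N \<le> D^2"
  using ell2_sq[of M N] ennreal_sq_le[of "ell2 M N" D] power_mono_ennreal[of "ell2 M N" D 2]
  by auto

lemma cramer_meas: "real_law M \<Longrightarrow> real_law N \<Longrightarrow>
   (\<lambda>x. ennreal ((cdf M x - cdf N x)\<^sup>2)) \<in> borel_measurable borel"
  using cdf_meas[of M] cdf_meas[of N] by measurable

lemma cramer_zero:
  assumes M: "real_law M" and N: "real_law N" and z: "cramer_sq M N = 0"
  shows "M = N"
proof -
  have "AE x in lborel. ennreal ((cdf M x - cdf N x)\<^sup>2) = 0"
    using z cramer_meas[OF M N] unfolding cramer_sq_def
    by (subst nn_integral_0_iff_AE[symmetric]) auto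
  then have AE: "AE x in lborel. cdf M x = cdf N x"
    by (rule AE_mp) (auto intro!: AE_I2)
  have "cdf M = cdf N"
  proof
    fix x
    show "cdf M x = cdf N x"
    proof (rule ccontr)
      assume ne: "cdf M x \<noteq> cdf N x"
      have c: "continuous (at_right x) (\<lambda>y. cdf M y - cdf N y)"
        using rd_law[OF M] rd_law[OF N]
        by (intro continuous_diff)
           (auto intro: real_distribution.finite_borel_measure_M finite_borel_measure.cdf_is_right_cont)
      then have "((\<lambda>y. cdf M y - cdf N y) \<longlongrightarrow> cdf M x - cdf N x) (at_right x)"
        by (simp add: continuous_within)
      then have "eventually (\<lambda>y. cdf M y - cdf N y \<noteq> 0) (at_right x)"
        by (rule tendsto_imp_eventually_ne) (use ne in auto)
      then obtain b where b: "b > x" "\<And>y. x < y \<Longrightarrow> y < b \<Longrightarrow> cdf M y \<noteq> cdf N y"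
        using eventually_at_right[of x "x+1"] by auto
      from AE obtain S where S: "{y \<in> space lborel. \<not> cdf M y = cdf N y} \<subseteq> S"
        "emeasure lborel S = 0" "S \<in> sets lborel"
        by (rule AE_E)
      have "{x<..<b} \<subseteq> S" using S(1) b(2) by auto
      then have "emeasure lborel {x<..<b} \<le> emeasure lborel S"
        using S(3) by (intro emeasure_mono) auto
      then show False using S(2) b(1) by simp
    qed
  qed
  then show ?thesis using cdf_unique rd_law M N by blast
qed

lemma sq_split: "t > 0 \<Longrightarrow> ((f::real) + g)\<^sup>2 \<le> (1+t) * f\<^sup>2 + (1 + 1/t) * g\<^sup>2"
proof -
  assume t: "t > 0"
  have "0 \<le> (t*f - g)\<^sup>2 / t" using t by simp
  also have "(t*f - g)\<^sup>2 / t = t * f\<^sup>2 - 2*f*g + g\<^sup>2 / t"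
    using t by (simp add: power2_eq_square field_simps)
  finally show ?thesis using t by (simp add: power2_eq_square field_simps)
qed

lemma minkowski:
  fixes f g :: "real \<Rightarrow> real"
  assumes [measurable]: "f \<in> borel_measurable borel" "g \<in> borel_measurable borel"
    and x: "x\<^sup>2 = (\<integral>\<^sup>+ z. ennreal ((f z)\<^sup>2) \<partial>lborel)"
    and y: "y\<^sup>2 = (\<integral>\<^sup>+ z. ennreal ((g z)\<^sup>2) \<partial>lborel)"
  shows "(\<integral>\<^sup>+ z. ennreal ((f z + g z)\<^sup>2) \<partial>lborel) \<le> (x + y)\<^sup>2"
proof (cases "x = \<top> \<or> y = \<top>")
  case True then show ?thesis by auto
next
  case False
  then obtain a b where ab: "x = ennreal a" "y = ennreal b" "0 \<le> a" "0 \<le> b"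
    by (metis ennreal_cases)
  show ?thesis
  proof (cases "a = 0")
    case True
    then have "(\<integral>\<^sup>+ z. ennreal ((f z)\<^sup>2) \<partial>lborel) = 0" using x ab by simp
    then have "AE z in lborel. ennreal ((f z)\<^sup>2) = 0"
      by (subst nn_integral_0_iff_AE[symmetric]) auto
    then have "AE z in lborel. f z = 0" by (rule AE_mp) (auto intro!: AE_I2)
    then have "(\<integral>\<^sup>+ z. ennreal ((f z + g z)\<^sup>2) \<partial>lborel) = (\<integral>\<^sup>+ z. ennreal ((g z)\<^sup>2) \<partial>lborel)"
      by (intro nn_integral_cong_AE) auto
    then show ?thesis using y ab True by simp
  next
    case a0: False
    show ?thesis
    proof (cases "b = 0")
      case True
      then have "(\<integral>\<^sup>+ z. ennreal ((g z)\<^sup>2) \<partial>lborel) = 0" using y ab by simp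
      then have "AE z in lborel. ennreal ((g z)\<^sup>2) = 0"
        by (subst nn_integral_0_iff_AE[symmetric]) auto
      then have "AE z in lborel. g z = 0" by (rule AE_mp) (auto intro!: AE_I2)
      then have "(\<integral>\<^sup>+ z. ennreal ((f z + g z)\<^sup>2) \<partial>lborel) = (\<integral>\<^sup>+ z. ennreal ((f z)\<^sup>2) \<partial>lborel)"
        by (intro nn_integral_cong_AE) auto
      then show ?thesis using x ab True by simp
    next
      case b0: False
      define t where "t = b / a"
      have t: "t > 0" using ab a0 b0 by (simp add: t_def)
      have "(\<integral>\<^sup>+ z. ennreal ((f z + g z)\<^sup>2) \<partial>lborel)
          \<le> (\<integral>\<^sup>+ z. ennreal (1+t) * ennreal ((f z)\<^sup>2) + ennreal (1+1/t) * ennreal ((g z)\<^sup>2) \<partial>lborel)"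
        using t by (intro nn_integral_mono)
          (simp add: ennreal_mult[symmetric] ennreal_plus[symmetric] sq_split del: ennreal_plus)
      also have "\<dots> = ennreal (1+t) * (\<integral>\<^sup>+ z. ennreal ((f z)\<^sup>2) \<partial>lborel)
           + ennreal (1+1/t) * (\<integral>\<^sup>+ z. ennreal ((g z)\<^sup>2) \<partial>lborel)"
        by (simp add: nn_integral_add nn_integral_cmult)
      also have "\<dots> = ennreal ((1+t) * a\<^sup>2 + (1+1/t) * b\<^sup>2)"
        using t ab x[symmetric] y[symmetric]
        by (simp add: ennreal_power ennreal_mult[symmetric] ennreal_plus[symmetric] del: ennreal_plus)
      also have "(1+t) * a\<^sup>2 + (1+1/t) * b\<^sup>2 = (a + b)\<^sup>2"
        using a0 b0 ab unfolding t_def by (simp add: power2_eq_square field_simps)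
      also have "ennreal ((a+b)\<^sup>2) = (x+y)\<^sup>2"
        using ab by (simp add: ennreal_power ennreal_plus[symmetric] del: ennreal_plus)
      finally show ?thesis .
    qed
  qed
qed

lemma ell2_tri:
  assumes M1: "real_law M1" and M2: "real_law M2" and M3: "real_law M3"
  shows "ell2 M1 M3 \<le> ell2 M1 M2 + ell2 M2 M3"
proof -
  have [measurable]: "cdf M1 \<in> borel_measurable borel" "cdf M2 \<in> borel_measurable borel"
    "cdf M3 \<in> borel_measurable borel" using cdf_meas M1 M2 M3 by auto
  have "cramer_sq M1 M3 \<le> (ell2 M1 M2 + ell2 M2 M3)\<^sup>2"
    unfolding cramer_sq_def
    using minkowski[of "\<lambda>z. cdf M1 z - cdf M2 z" "\<lambda>z. cdf M2 z - cdf M3 z"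
        "ell2 M1 M2" "ell2 M2 M3"]
    by (simp add: ell2_sq cramer_sq_def)
  then show ?thesis by (simp add: ell2_le_iff)
qed

lemma law_emeasure: "real_law M \<Longrightarrow> emeasure M {..y} = ennreal (cdf M y)"
proof -
  assume "real_law M"
  then interpret prob_space M by (simp add: real_law_def)
  show ?thesis unfolding cdf_def by (simp add: emeasure_eq_measure)
qed

lemma bind_law:
  fixes p :: "'x::finite pmf"
  assumes K: "\<And>x. real_law (K x)"
  shows "real_law (measure_pmf p \<bind> K)"
    and "cdf (measure_pmf p \<bind> K) y = (\<Sum>x\<in>UNIV. pmf p x * cdf (K x) y)"
proof -
  have Km: "K \<in> measurable (measure_pmf p) (subprob_algebra borel)"
    using K by (auto simp: space_subprob_algebra real_law_def prob_space_imp_subprob_space)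
  have sets: "sets (measure_pmf p \<bind> K) = sets borel"
    using K by (intro sets_bind) (auto simp: real_law_def)
  have ps: "prob_space (measure_pmf p \<bind> K)"
    using K Km by (intro measure_pmf.prob_space_bind) (auto simp: real_law_def)
  show law: "real_law (measure_pmf p \<bind> K)" using sets ps by (simp add: real_law_def)
  have "emeasure (measure_pmf p \<bind> K) {..y} = (\<integral>\<^sup>+x. emeasure (K x) {..y} \<partial>measure_pmf p)"
    using Km by (intro emeasure_bind) auto
  also have "\<dots> = (\<Sum>x\<in>UNIV. emeasure (K x) {..y} * pmf p x)"
    by (intro nn_integral_measure_pmf_support) auto
  also have "\<dots> = ennreal (\<Sum>x\<in>UNIV. pmf p x * cdf (K x) y)"
    using K by (simp add: law_emeasure ennreal_mult[symmetric] mult.commute cdf_01 del: sum_ennreal)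
      (subst sum_ennreal, auto simp: cdf_01)
  finally have "ennreal (cdf (measure_pmf p \<bind> K) y) = ennreal (\<Sum>x\<in>UNIV. pmf p x * cdf (K x) y)"
    using law_emeasure[OF law, of y] by simp
  moreover have "0 \<le> (\<Sum>x\<in>UNIV. pmf p x * cdf (K x) y)"
    using cdf_01[OF K] by (auto intro!: sum_nonneg)
  ultimately show "cdf (measure_pmf p \<bind> K) y = (\<Sum>x\<in>UNIV. pmf p x * cdf (K x) y)"
    using cdf_01[OF law, of y] by (subst (asm) ennreal_inj) auto
qed

lemma scale_law:
  assumes T: "real_law T" and g: "(\<gamma>::real) > 0"
  shows "real_law (distr T borel (\<lambda>x. \<gamma> * x))"
    and "cdf (distr T borel (\<lambda>x. \<gamma> * x)) y = cdf T (y / \<gamma>)"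
proof -
  have sT[measurable_cong]: "sets T = sets borel" using T by (simp add: real_law_def)
  have m: "(\<lambda>x. \<gamma> * x) \<in> measurable T borel" by measurable
  show "real_law (distr T borel (\<lambda>x. \<gamma> * x))"
    using T m by (auto simp: real_law_def intro: prob_space.prob_space_distr)
  have sp: "space T = UNIV" using sets_eq_imp_space_eq[OF sT] by simp
  have "(\<lambda>x. \<gamma> * x) -` {..y} \<inter> space T = {..y / \<gamma>}"
    using g by (auto simp: sp pos_le_divide_eq mult.commute)
  then show "cdf (distr T borel (\<lambda>x. \<gamma> * x)) y = cdf T (y / \<gamma>)"
    unfolding cdf_def using m by (simp add: measure_distr)
qed

lemma conv_law:
  assumes R: "real_law R" and N: "real_law N"
  shows "real_law (convolution R N)"
    and "integrable R (\<lambda>r. cdf N (x - r))"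
    and "cdf (convolution R N) x = (\<integral> r. cdf N (x - r) \<partial>R)"
proof -
  have sR[measurable_cong]: "sets R = sets borel" using R by (simp add: real_law_def)
  have sN[measurable_cong]: "sets N = sets borel" using N by (simp add: real_law_def)
  interpret R: prob_space R using R by (simp add: real_law_def)
  interpret N: prob_space N using N by (simp add: real_law_def)
  interpret RN: prob_space "R \<Otimes>\<^sub>M N" by (intro prob_space_pair) unfold_locales
  have "(\<lambda>(x, y). x + y) \<in> measurable (R \<Otimes>\<^sub>M N) (borel :: real measure)"
    by measurable
  then have "prob_space (convolution R N)"
    unfolding convolution_def by (rule RN.prob_space_distr)
  then show law: "real_law (convolution R N)" by (simp add: real_law_def)
  have [measurable]: "cdf N \<in> borel_measurable borel" using cdf_meas[OF N] .
  show int: "integrable R (\<lambda>r. cdf N (x - r))"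
    by (rule R.integrable_const_bound[where B=1]) (auto simp: cdf_01[OF N])
  have "emeasure (convolution R N) {..x} = (\<integral>\<^sup>+ r. \<integral>\<^sup>+ y. indicator {..x} (r + y) \<partial>N \<partial>R)"
    by (rule convolution_emeasure') (auto simp: sR sN R.finite_measure_axioms N.finite_measure_axioms)
  also have "\<dots> = (\<integral>\<^sup>+ r. ennreal (cdf N (x - r)) \<partial>R)"
  proof (intro nn_integral_cong)
    fix r
    have "(\<integral>\<^sup>+ y. indicator {..x} (r + y) \<partial>N) = (\<integral>\<^sup>+ y. indicator {..x - r} y \<partial>N)"
      by (intro nn_integral_cong) (auto simp: indicator_def)
    also have "\<dots> = emeasure N {..x - r}" by (simp add: sN)
    finally show "(\<integral>\<^sup>+ y. indicator {..x} (r + y) \<partial>N) = ennreal (cdf N (x - r))"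
      using law_emeasure[OF N] by simp
  qed
  also have "\<dots> = ennreal (\<integral> r. cdf N (x - r) \<partial>R)"
    using int by (intro nn_integral_eq_integral) (auto simp: cdf_01[OF N])
  finally have "ennreal (cdf (convolution R N) x) = ennreal (\<integral> r. cdf N (x - r) \<partial>R)"
    using law_emeasure[OF law] by simp
  then show "cdf (convolution R N) x = (\<integral> r. cdf N (x - r) \<partial>R)"
    using cdf_01[OF law, of x] cdf_01[OF N]
    by (subst (asm) ennreal_inj) (auto intro!: integral_nonneg_AE)
qed

lemma jensen_sq:
  fixes f :: "'b \<Rightarrow> real"
  assumes "prob_space M" "f \<in> borel_measurable M" "\<And>x. \<bar>f x\<bar> \<le> 1"
  shows "(\<integral> x. f x \<partial>M)\<^sup>2 \<le> (\<integral> x. (f x)\<^sup>2 \<partial>M)"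
proof -
  interpret prob_space M by fact
  have i1: "integrable M f" using assms(2,3) by (intro integrable_const_bound[where B=1]) auto
  have "\<bar>(f x)\<^sup>2\<bar> \<le> 1" for x
  proof -
    have "\<bar>f x\<bar>\<^sup>2 \<le> 1\<^sup>2" using assms(3)[of x] by (intro power_mono) auto
    then show ?thesis by simp
  qed
  then have i2: "integrable M (\<lambda>x. (f x)\<^sup>2)" using assms(2)
    by (intro integrable_const_bound[where B=1]) auto
  show ?thesis using variance_positive[of f] variance_eq[OF i1 i2] by simp
qed

lemma fin_jensen:
  fixes w d :: "'x \<Rightarrow> real"
  assumes "finite A" "\<And>x. x \<in> A \<Longrightarrow> 0 \<le> w x" "(\<Sum>x\<in>A. w x) = 1"
  shows "(\<Sum>x\<in>A. w x * d x)\<^sup>2 \<le> (\<Sum>x\<in>A. w x * (d x)\<^sup>2)"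
proof -
  define m where "m = (\<Sum>x\<in>A. w x * d x)"
  have "0 \<le> (\<Sum>x\<in>A. w x * (d x - m)\<^sup>2)" using assms(2) by (intro sum_nonneg) auto
  also have "\<dots> = (\<Sum>x\<in>A. w x * (d x)\<^sup>2 - 2 * m * (w x * d x) + m\<^sup>2 * w x)"
    by (intro sum.cong) (auto simp: power2_eq_square algebra_simps)
  also have "\<dots> = (\<Sum>x\<in>A. w x * (d x)\<^sup>2) - 2 * m * m + m\<^sup>2 * (\<Sum>x\<in>A. w x)"
    by (simp add: sum.distrib sum_subtractf sum_distrib_left m_def)
  finally show ?thesis using assms(3) by (simp add: m_def power2_eq_square)
qed

lemma trans_law:
  fixes P :: "'s::finite \<Rightarrow> 'a::finite \<Rightarrow> 's pmf"
  assumes Z: "value_dist Z"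
  shows "real_law (trans_op P \<pi> Z s a)"
    and "cdf (trans_op P \<pi> Z s a) y =
      (\<Sum>s'\<in>UNIV. pmf (P s a) s' * (\<Sum>a'\<in>UNIV. pmf (\<pi> s') a' * cdf (Z s' a') y))"
proof -
  have K: "real_law (measure_pmf (\<pi> s') \<bind> (\<lambda>a'. Z s' a'))" for s'
    using Z by (intro bind_law) (auto simp: value_dist_def)
  show "real_law (trans_op P \<pi> Z s a)"
    unfolding trans_op_def by (intro bind_law K)
  show "cdf (trans_op P \<pi> Z s a) y =
      (\<Sum>s'\<in>UNIV. pmf (P s a) s' * (\<Sum>a'\<in>UNIV. pmf (\<pi> s') a' * cdf (Z s' a') y))"
    unfolding trans_op_def using Z
    by (simp add: bind_law(2)[OF K] bind_law(2) value_dist_def)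
qed

lemma bellman_step:
  fixes P :: "'s::finite \<Rightarrow> 'a::finite \<Rightarrow> 's pmf"
    and \<pi> :: "'s \<Rightarrow> 'a pmf"
    and R :: "'s \<Rightarrow> 'a \<Rightarrow> real measure"
  assumes R: "value_dist R" and g: "0 < \<gamma>"
    and Z1: "value_dist Z1" and Z2: "value_dist Z2"
    and D: "\<And>s' a'. ell2 (Z1 s' a') (Z2 s' a') \<le> D"
  shows "ell2 (bellman P \<pi> R \<gamma> Z1 s a) (bellman P \<pi> R \<gamma> Z2 s a) \<le> ennreal (sqrt \<gamma>) * D"
proof -
  define T1 where "T1 = trans_op P \<pi> Z1 s a"
  define T2 where "T2 = trans_op P \<pi> Z2 s a"
  define N1 where "N1 = distr T1 borel (\<lambda>x. \<gamma> * x)"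
  define N2 where "N2 = distr T2 borel (\<lambda>x. \<gamma> * x)"
  define RR where "RR = R s a"
  have RR: "real_law RR" using R by (simp add: RR_def value_dist_def)
  have T1: "real_law T1" and T2: "real_law T2"
    using trans_law(1) Z1 Z2 by (auto simp: T1_def T2_def)
  have N1: "real_law N1" and N2: "real_law N2"
    using scale_law(1) T1 T2 g by (auto simp: N1_def N2_def)
  define p where "p s' = pmf (P s a) s'" for s'
  define q where "q s' a' = pmf (\<pi> s') a'" for s' a'
  define \<delta> where "\<delta> s' a' z = cdf (Z1 s' a') z - cdf (Z2 s' a') z" for s' a' z
  define e where "e z = cdf T1 z - cdf T2 z" for z
  define d where "d y = cdf N1 y - cdf N2 y" for y
  have e_eq: "e z = (\<Sum>s'\<in>UNIV. p s' * (\<Sum>a'\<in>UNIV. q s' a' * \<delta> s' a' z))" for z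
    unfolding e_def T1_def T2_def p_def q_def \<delta>_def trans_law(2)[OF Z1] trans_law(2)[OF Z2]
    by (simp add: sum_subtractf[symmetric] right_diff_distrib[symmetric])
  have d_eq: "d y = e (y / \<gamma>)" for y
    unfolding d_def e_def N1_def N2_def using scale_law(2) T1 T2 g by simp
  have d_bd: "\<bar>d y\<bar> \<le> 1" for y
    using cdf_01[OF N1, of y] cdf_01[OF N2, of y] by (simp add: d_def abs_le_iff)
  have [measurable]: "cdf N1 \<in> borel_measurable borel" "cdf N2 \<in> borel_measurable borel"
    using cdf_meas N1 N2 by auto
  have dm[measurable]: "d \<in> borel_measurable borel" unfolding d_def by measurable
  have sRR[measurable_cong]: "sets RR = sets borel" using RR by (simp add: real_law_def)
  interpret pR: prob_space RR using RR by (simp add: real_law_def)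
  have B_eq: "cdf (bellman P \<pi> R \<gamma> Z1 s a) x - cdf (bellman P \<pi> R \<gamma> Z2 s a) x
      = (\<integral> r. d (x - r) \<partial>RR)" for x
    unfolding bellman_def T1_def[symmetric] T2_def[symmetric] N1_def[symmetric] N2_def[symmetric]
      RR_def[symmetric] d_def
    using conv_law[OF RR N1] conv_law[OF RR N2] by (simp add: Bochner_Integration.integral_diff)
  have "cramer_sq (bellman P \<pi> R \<gamma> Z1 s a) (bellman P \<pi> R \<gamma> Z2 s a)
      = (\<integral>\<^sup>+ x. ennreal ((\<integral> r. d (x - r) \<partial>RR)\<^sup>2) \<partial>lborel)"
    unfolding cramer_sq_def B_eq ..
  also have "\<dots> \<le> (\<integral>\<^sup>+ x. \<integral>\<^sup>+ r. ennreal ((d (x - r))\<^sup>2) \<partial>RR \<partial>lborel)"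
  proof (intro nn_integral_mono)
    fix x
    have "(\<integral> r. d (x - r) \<partial>RR)\<^sup>2 \<le> (\<integral> r. (d (x - r))\<^sup>2 \<partial>RR)"
      by (rule jensen_sq) (auto simp: d_bd pR.prob_space_axioms)
    moreover have "ennreal (\<integral> r. (d (x - r))\<^sup>2 \<partial>RR) = (\<integral>\<^sup>+ r. ennreal ((d (x - r))\<^sup>2) \<partial>RR)"
    proof (rule nn_integral_eq_integral[symmetric])
      have "\<bar>(d (x - r))\<^sup>2\<bar> \<le> 1" for r
      proof -
        have "\<bar>d (x - r)\<bar>\<^sup>2 \<le> 1\<^sup>2" using d_bd[of "x - r"] by (intro power_mono) auto
        then show ?thesis by simp
      qed
      then show "integrable RR (\<lambda>r. (d (x - r))\<^sup>2)"
        by (intro pR.integrable_const_bound[where B=1]) auto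
    qed auto
    ultimately show "ennreal ((\<integral> r. d (x - r) \<partial>RR)\<^sup>2) \<le> (\<integral>\<^sup>+ r. ennreal ((d (x - r))\<^sup>2) \<partial>RR)"
      by (metis ennreal_leI)
  qed
  also have "\<dots> = (\<integral>\<^sup>+ r. \<integral>\<^sup>+ x. ennreal ((d (x - r))\<^sup>2) \<partial>lborel \<partial>RR)"
  proof -
    interpret pair_sigma_finite RR lborel ..
    show ?thesis
      by (rule Fubini'[where f="\<lambda>r x. ennreal ((d (x - r))\<^sup>2)"]) measurable
  qed
  also have "\<dots> = (\<integral>\<^sup>+ r. (\<integral>\<^sup>+ x. ennreal ((d x)\<^sup>2) \<partial>lborel) \<partial>RR)"
  proof -
    have "(\<integral>\<^sup>+ x. ennreal ((d (x - r))\<^sup>2) \<partial>lborel) = (\<integral>\<^sup>+ x. ennreal ((d x)\<^sup>2) \<partial>lborel)" for r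
      using nn_integral_real_affine[of "\<lambda>x. ennreal ((d (x - r))\<^sup>2)" 1 r] by simp
    then show ?thesis by simp
  qed
  also have "\<dots> = (\<integral>\<^sup>+ x. ennreal ((d x)\<^sup>2) \<partial>lborel)"
    by (simp add: pR.emeasure_space_1)
  also have "\<dots> = ennreal \<gamma> * (\<integral>\<^sup>+ z. ennreal ((e z)\<^sup>2) \<partial>lborel)"
  proof -
    have m: "(\<lambda>x. ennreal ((d x)\<^sup>2)) \<in> borel_measurable borel" by measurable
    have "(\<integral>\<^sup>+ x. ennreal ((d x)\<^sup>2) \<partial>lborel) = ennreal \<bar>\<gamma>\<bar> * (\<integral>\<^sup>+ x. ennreal ((d (0 + \<gamma> * x))\<^sup>2) \<partial>lborel)"
      by (rule nn_integral_real_affine[OF m]) (use g in auto)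
    then show ?thesis using g by (simp add: d_eq)
  qed
  also have "\<dots> \<le> ennreal \<gamma> * D\<^sup>2"
  proof (intro mult_left_mono)
    define W where "W s' a' = p s' * q s' a'" for s' a'
    have W0: "0 \<le> W s' a'" for s' a' by (simp add: W_def p_def q_def)
    have p1: "(\<Sum>s'\<in>UNIV. p s') = 1" unfolding p_def by (rule sum_pmf_eq_1) auto
    have q1: "(\<Sum>a'\<in>UNIV. q s' a') = 1" for s' unfolding q_def by (rule sum_pmf_eq_1) auto
    have W1: "(\<Sum>s'\<in>UNIV. \<Sum>a'\<in>UNIV. W s' a') = 1"
      by (simp add: W_def sum_distrib_left[symmetric] q1 p1)
    have pt: "(e z)\<^sup>2 \<le> (\<Sum>s'\<in>UNIV. \<Sum>a'\<in>UNIV. W s' a' * (\<delta> s' a' z)\<^sup>2)" for z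
    proof -
      have "(e z)\<^sup>2 \<le> (\<Sum>s'\<in>UNIV. p s' * (\<Sum>a'\<in>UNIV. q s' a' * \<delta> s' a' z)\<^sup>2)"
        unfolding e_eq using p1 by (intro fin_jensen) (auto simp: p_def)
      also have "\<dots> \<le> (\<Sum>s'\<in>UNIV. p s' * (\<Sum>a'\<in>UNIV. q s' a' * (\<delta> s' a' z)\<^sup>2))"
        using q1 by (intro sum_mono mult_left_mono fin_jensen) (auto simp: p_def q_def)
      also have "\<dots> = (\<Sum>s'\<in>UNIV. \<Sum>a'\<in>UNIV. W s' a' * (\<delta> s' a' z)\<^sup>2)"
        by (simp add: W_def sum_distrib_left mult.assoc)
      finally show ?thesis .
    qed
    have [measurable]: "cdf (Z1 s' a') \<in> borel_measurable borel" "cdf (Z2 s' a') \<in> borel_measurable borel" for s' a'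
      using cdf_meas Z1 Z2 by (auto simp: value_dist_def)
    have cr: "cramer_sq (Z1 s' a') (Z2 s' a') \<le> D\<^sup>2" for s' a'
      using D ell2_le_iff by blast
    have "(\<integral>\<^sup>+ z. ennreal ((e z)\<^sup>2) \<partial>lborel)
        \<le> (\<integral>\<^sup>+ z. (\<Sum>s'\<in>UNIV. \<Sum>a'\<in>UNIV. ennreal (W s' a') * ennreal ((\<delta> s' a' z)\<^sup>2)) \<partial>lborel)"
    proof (intro nn_integral_mono)
      fix z
      have "(\<Sum>s'\<in>UNIV. \<Sum>a'\<in>UNIV. ennreal (W s' a') * ennreal ((\<delta> s' a' z)\<^sup>2))
          = ennreal (\<Sum>s'\<in>UNIV. \<Sum>a'\<in>UNIV. W s' a' * (\<delta> s' a' z)\<^sup>2)"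
        using W0 by (simp add: ennreal_mult[symmetric] sum_nonneg)
      then show "ennreal ((e z)\<^sup>2) \<le> (\<Sum>s'\<in>UNIV. \<Sum>a'\<in>UNIV. ennreal (W s' a') * ennreal ((\<delta> s' a' z)\<^sup>2))"
        using pt[of z] by (simp add: ennreal_leI)
    qed
    also have "\<dots> = (\<Sum>s'\<in>UNIV. \<Sum>a'\<in>UNIV. ennreal (W s' a') * cramer_sq (Z1 s' a') (Z2 s' a'))"
      unfolding cramer_sq_def \<delta>_def
      by (simp add: nn_integral_sum nn_integral_cmult)
    also have "\<dots> \<le> (\<Sum>s'\<in>UNIV. \<Sum>a'\<in>UNIV. ennreal (W s' a') * D\<^sup>2)"
      by (intro sum_mono mult_left_mono cr) auto
    also have "\<dots> = ennreal (\<Sum>s'\<in>UNIV. \<Sum>a'\<in>UNIV. W s' a') * D\<^sup>2"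
      using W0 by (simp add: sum_distrib_right[symmetric] sum_nonneg)
    also have "\<dots> = D\<^sup>2" by (simp add: W1)
    finally show "(\<integral>\<^sup>+ z. ennreal ((e z)\<^sup>2) \<partial>lborel) \<le> D\<^sup>2" .
  qed simp
  also have "\<dots> = (ennreal (sqrt \<gamma>) * D)\<^sup>2"
    using g by (simp add: power_mult_distrib ennreal_power)
  finally show ?thesis by (simp add: ell2_le_iff)
qed

lemma ell2_self: "ell2 M M = 0"
  unfolding ell2_def cramer_sq_def by simp

lemma ell2_sym: "ell2 M N = ell2 N M"
  unfolding ell2_def cramer_sq_def by (simp add: power2_commute)

lemma ell2_le_bar: "ell2 (Z1 s a) (Z2 s a) \<le> ell2_bar Z1 Z2"
  unfolding ell2_bar_def by (rule SUP_upper2[of "(s,a)"]) auto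

theorem proposition1:
  fixes P :: "'s::finite \<Rightarrow> 'a::finite \<Rightarrow> 's pmf"
    and \<pi> :: "'s \<Rightarrow> 'a pmf"
    and R :: "'s \<Rightarrow> 'a \<Rightarrow> real measure"
    and \<gamma> :: real
  assumes R: "value_dist R"
    and \<gamma>: "0 < \<gamma>" "\<gamma> < 1"
  shows "(\<forall>Z :: 's \<Rightarrow> 'a \<Rightarrow> real measure. value_dist Z \<longrightarrow> ell2_bar Z Z = 0)
    \<and> (\<forall>(Z1 :: 's \<Rightarrow> 'a \<Rightarrow> real measure) Z2. value_dist Z1 \<longrightarrow> value_dist Z2 \<longrightarrow> ell2_bar Z1 Z2 = 0 \<longrightarrow> Z1 = Z2)
    \<and> (\<forall>(Z1 :: 's \<Rightarrow> 'a \<Rightarrow> real measure) Z2. value_dist Z1 \<longrightarrow> value_dist Z2 \<longrightarrow> ell2_bar Z1 Z2 = ell2_bar Z2 Z1)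
    \<and> (\<forall>(Z1 :: 's \<Rightarrow> 'a \<Rightarrow> real measure) Z2 Z3. value_dist Z1 \<longrightarrow> value_dist Z2 \<longrightarrow> value_dist Z3 \<longrightarrow>
          ell2_bar Z1 Z3 \<le> ell2_bar Z1 Z2 + ell2_bar Z2 Z3)
    \<and> (\<forall>(Z1 :: 's \<Rightarrow> 'a \<Rightarrow> real measure) Z2. value_dist Z1 \<longrightarrow> value_dist Z2 \<longrightarrow>
          ell2_bar (bellman P \<pi> R \<gamma> Z1) (bellman P \<pi> R \<gamma> Z2)
            \<le> ennreal (sqrt \<gamma>) * ell2_bar Z1 Z2)"
proof (intro conjI allI impI)
  fix Z :: "'s \<Rightarrow> 'a \<Rightarrow> real measure"
  show "ell2_bar Z Z = 0" unfolding ell2_bar_def by (simp add: ell2_self)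
next
  fix Z1 Z2 :: "'s \<Rightarrow> 'a \<Rightarrow> real measure"
  assume Z1: "value_dist Z1" and Z2: "value_dist Z2" and z: "ell2_bar Z1 Z2 = 0"
  show "Z1 = Z2"
  proof (intro ext)
    fix s a
    have "ell2 (Z1 s a) (Z2 s a) = 0" using ell2_le_bar[of Z1 s a Z2] z by simp
    then have "cramer_sq (Z1 s a) (Z2 s a) = 0" using ell2_sq[of "Z1 s a" "Z2 s a"] by simp
    then show "Z1 s a = Z2 s a" using cramer_zero Z1 Z2 by (auto simp: value_dist_def)
  qed
next
  fix Z1 Z2 :: "'s \<Rightarrow> 'a \<Rightarrow> real measure"
  show "ell2_bar Z1 Z2 = ell2_bar Z2 Z1" unfolding ell2_bar_def by (simp add: ell2_sym)
next
  fix Z1 Z2 Z3 :: "'s \<Rightarrow> 'a \<Rightarrow> real measure"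
  assume Z1: "value_dist Z1" and Z2: "value_dist Z2" and Z3: "value_dist Z3"
  show "ell2_bar Z1 Z3 \<le> ell2_bar Z1 Z2 + ell2_bar Z2 Z3"
    unfolding ell2_bar_def[of Z1 Z3]
  proof (rule SUP_least)
    fix sa :: "'s \<times> 'a"
    have "ell2 (Z1 (fst sa) (snd sa)) (Z3 (fst sa) (snd sa))
       \<le> ell2 (Z1 (fst sa) (snd sa)) (Z2 (fst sa) (snd sa)) + ell2 (Z2 (fst sa) (snd sa)) (Z3 (fst sa) (snd sa))"
      using Z1 Z2 Z3 by (intro ell2_tri) (auto simp: value_dist_def)
    also have "\<dots> \<le> ell2_bar Z1 Z2 + ell2_bar Z2 Z3"
      by (intro add_mono ell2_le_bar)
    finally show "ell2 (Z1 (fst sa) (snd sa)) (Z3 (fst sa) (snd sa)) \<le> ell2_bar Z1 Z2 + ell2_bar Z2 Z3" .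
  qed
next
  fix Z1 Z2 :: "'s \<Rightarrow> 'a \<Rightarrow> real measure"
  assume Z1: "value_dist Z1" and Z2: "value_dist Z2"
  show "ell2_bar (bellman P \<pi> R \<gamma> Z1) (bellman P \<pi> R \<gamma> Z2) \<le> ennreal (sqrt \<gamma>) * ell2_bar Z1 Z2"
    unfolding ell2_bar_def[of "bellman P \<pi> R \<gamma> Z1"]
  proof (rule SUP_least)
    fix sa :: "'s \<times> 'a"
    show "ell2 (bellman P \<pi> R \<gamma> Z1 (fst sa) (snd sa)) (bellman P \<pi> R \<gamma> Z2 (fst sa) (snd sa))
        \<le> ennreal (sqrt \<gamma>) * ell2_bar Z1 Z2"
      using ell2_le_bar[of Z1 _ _ Z2] by (intro bellman_step[OF R \<gamma>(1) Z1 Z2]) auto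
  qed
qed

end
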